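(* Let $X$ be a real Banach lattice and let $A \subseteq X$ be a solid set. Then an element $a \in A$ is an extreme point of $A$ if and only if $|a|$ is an order extreme point of $A$.
   Context: A set $C\subseteq X$ is solid if whenever $x\in X$, $z\in C$ and $|x|\le |z|$, then $x\in C$. For $A \subseteq X$, a point $a\in A$ is an order extreme point of $A$ if for all $x_0,x_1\in A$ and $t\in(0,1)$, the inequality $a\le (1-t)x_0+tx_1$ implies $x_0=a=x_1$. Extreme points are meant in the usual (convexity) sense. *)

theory Defs
  imports "HOL-Analysis.Analysis" "HOL-Library.Lattice_Algebras"
begin

class banach_lattice = banach + ordered_real_vector + lattice_ab_group_add_abs +
  assumes lattice_norm: "\<bar>x\<bar> \<le> \<bar>y\<bar> \<Longrightarrow> norm x \<le> norm y"

definition solid :: "'a::banach_lattice set \<Rightarrow> bool" where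
  "solid C \<longleftrightarrow> (\<forall>x z. z \<in> C \<and> \<bar>x\<bar> \<le> \<bar>z\<bar> \<longrightarrow> x \<in> C)"

definition order_extreme_point :: "'a::banach_lattice \<Rightarrow> 'a set \<Rightarrow> bool" where
  "order_extreme_point a A \<longleftrightarrow> a \<in> A \<and>
     (\<forall>x0\<in>A. \<forall>x1\<in>A. \<forall>t::real. 0 < t \<and> t < 1 \<and>
        a \<le> (1 - t) *\<^sub>R x0 + t *\<^sub>R x1 \<longrightarrow> x0 = a \<and> x1 = a)"

end

theory Submission imports Defs begin

lemma abs_scale_le:
  fixes x :: "'a::banach_lattice"
  assumes "0 \<le> c"
  shows "\<bar>c *\<^sub>R x\<bar> \<le> c *\<^sub>R \<bar>x\<bar>"
proof (rule abs_leI)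
  show "c *\<^sub>R x \<le> c *\<^sub>R \<bar>x\<bar>" using assms by (intro scaleR_left_mono abs_ge_self)
  have "c *\<^sub>R (-x) \<le> c *\<^sub>R \<bar>x\<bar>" using assms by (intro scaleR_left_mono abs_ge_minus_self)
  then show "- (c *\<^sub>R x) \<le> c *\<^sub>R \<bar>x\<bar>" by simp
qed

lemma abs_conv_le:
  fixes x y :: "'a::banach_lattice"
  assumes "0 \<le> c" "0 \<le> d"
  shows "\<bar>c *\<^sub>R x + d *\<^sub>R y\<bar> \<le> c *\<^sub>R \<bar>x\<bar> + d *\<^sub>R \<bar>y\<bar>"
  by (meson abs_scale_le abs_triangle_ineq add_mono assms order_trans)

lemma abs_sup_pm:
  fixes a e :: "'a::banach_lattice"
  shows "sup \<bar>a + e\<bar> \<bar>a - e\<bar> = \<bar>a\<bar> + \<bar>e\<bar>"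
proof -
  have "\<bar>a\<bar> + \<bar>e\<bar> = sup (a + sup e (-e)) (-a + sup e (-e))"
    unfolding abs_lattice[of a] abs_lattice[of e] by (rule add_sup_distrib_right)
  also have "\<dots> = sup (sup (a + e) (a + - e)) (sup (-a + e) (-a + - e))"
    by (simp only: add_sup_distrib_left)
  also have "\<dots> = sup (sup (a + e) (- (a + e))) (sup (a - e) (- (a - e)))"
  proof -
    have "-(a+e) = -a + -e" "a - e = a + -e" "-(a-e) = -a + e" by (simp_all add: algebra_simps)
    then show ?thesis by (simp only:) (simp only: sup_aci)
  qed
  finally show ?thesis unfolding abs_lattice[of "a+e"] abs_lattice[of "a-e"] by simp
qed
lemma solidD: "solid A \<Longrightarrow> z \<in> A \<Longrightarrow> \<bar>x\<bar> \<le> \<bar>z\<bar> \<Longrightarrow> x \<in> A"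
  unfolding solid_def by blast

lemma clamp:
  fixes a P Q :: "'a::banach_lattice"
  assumes P: "0 \<le> P" and Q: "0 \<le> Q" and aPQ: "\<bar>a\<bar> \<le> P + Q"
  shows "\<bar>inf (sup a (-P)) P\<bar> \<le> P" "\<bar>a - inf (sup a (-P)) P\<bar> \<le> Q"
proof -
  define X where "X = sup a (-P)"
  define b where "b = inf X P"
  have mPP: "-P \<le> P" using P by (meson neg_le_0_iff_le order_trans)
  have b1: "b \<le> P" unfolding b_def by simp
  have b2: "-P \<le> b" unfolding b_def X_def using mPP by (simp add: le_infI)
  show "\<bar>inf (sup a (-P)) P\<bar> \<le> P"
    unfolding b_def[unfolded X_def, symmetric]
    using b1 b2 by (intro abs_leI) (auto simp: minus_le_iff)
  have a1: "a \<le> P + Q" using aPQ abs_ge_self order_trans by blast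
  have a2: "-a \<le> P + Q" using aPQ abs_ge_minus_self order_trans by blast
  have c1: "a - Q \<le> b" unfolding b_def X_def
  proof (rule le_infI)
    show "a - Q \<le> sup a (- P)" using Q by (meson diff_le_eq le_add_same_cancel1 order_trans sup_ge1)
    show "a - Q \<le> P" using a1 by (simp add: diff_le_eq)
  qed
  have "X + P = sup (a + P) (-P + P)" unfolding X_def by (rule add_sup_distrib_right)
  also have "\<dots> \<le> a + Q + P"
  proof (rule le_supI)
    show "a + P \<le> a + Q + P" using Q by simp
    have "-a + a \<le> P + Q + a" using a2 by (rule add_right_mono)
    then show "-P + P \<le> a + Q + P" by (simp add: add_ac)
  qed
  finally have XP: "X + P \<le> a + Q + P" .
  have "inf X P + sup X P = X + P" using add_eq_inf_sup[of X P] by (simp only: add.commute)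
  also have "\<dots> \<le> a + Q + sup X P" using XP by (meson add_left_mono order_trans sup_ge2)
  finally have c2: "b \<le> a + Q" unfolding b_def by simp
  show "\<bar>a - inf (sup a (-P)) P\<bar> \<le> Q"
    unfolding b_def[unfolded X_def, symmetric]
  proof (rule abs_leI)
    show "a - b \<le> Q" using c1 by (metis add.commute diff_le_eq le_diff_eq)
    have "b - a \<le> Q" using c2 by (metis add.commute diff_le_eq)
    then show "- (a - b) \<le> Q" by simp
  qed
qed

lemma bwd:
  fixes A :: "'a::banach_lattice set" and a :: 'a
  assumes sol: "solid A" and aA: "a \<in> A" and oe: "order_extreme_point \<bar>a\<bar> A"
  shows "a extreme_point_of A"
  unfolding extreme_point_of_def
proof (intro conjI ballI aA notI)
  fix x0 x1 assume x0: "x0 \<in> A" and x1: "x1 \<in> A" and seg: "a \<in> open_segment x0 x1"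
  then obtain u where ne: "x0 \<noteq> x1" and u: "0 < u" "u < 1" and aeq: "a = (1 - u) *\<^sub>R x0 + u *\<^sub>R x1"
    by (auto simp: in_segment)
  have ax0: "\<bar>x0\<bar> \<in> A" by (rule solidD[OF sol x0]) simp
  have ax1: "\<bar>x1\<bar> \<in> A" by (rule solidD[OF sol x1]) simp
  have "\<bar>a\<bar> \<le> (1 - u) *\<^sub>R \<bar>x0\<bar> + u *\<^sub>R \<bar>x1\<bar>"
    unfolding aeq using u by (intro abs_conv_le) auto
  moreover have H: "\<forall>y0\<in>A. \<forall>y1\<in>A. \<forall>t::real. 0 < t \<and> t < 1 \<and>
        \<bar>a\<bar> \<le> (1 - t) *\<^sub>R y0 + t *\<^sub>R y1 \<longrightarrow> y0 = \<bar>a\<bar> \<and> y1 = \<bar>a\<bar>"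
    using oe unfolding order_extreme_point_def by (elim conjE)
  ultimately have "\<bar>x0\<bar> = \<bar>a\<bar> \<and> \<bar>x1\<bar> = \<bar>a\<bar>"
    using H[rule_format, OF ax0 ax1, of u] u by blast
  then have e0: "\<bar>x0\<bar> = \<bar>a\<bar>" and e1: "\<bar>x1\<bar> = \<bar>a\<bar>" by auto
  define d where "d = x0 - x1"
  define s where "s = min u (1 - u)"
  have s: "0 < s" "s \<le> u" "s \<le> 1 - u" using u by (auto simp: s_def)
  have x0d: "x0 = a + u *\<^sub>R d" unfolding aeq d_def by (simp add: algebra_simps)
  have x1d: "x1 = a - (1 - u) *\<^sub>R d" unfolding aeq d_def by (simp add: algebra_simps)
  have "a + s *\<^sub>R d = (1 - s/u) *\<^sub>R a + (s/u) *\<^sub>R x0"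
    using u unfolding x0d by (simp add: algebra_simps)
  also have "\<bar>\<dots>\<bar> \<le> (1 - s/u) *\<^sub>R \<bar>a\<bar> + (s/u) *\<^sub>R \<bar>x0\<bar>"
    using s u by (intro abs_conv_le) auto
  also have "\<dots> = \<bar>a\<bar>" unfolding e0 by (simp add: algebra_simps)
  finally have p: "\<bar>a + s *\<^sub>R d\<bar> \<le> \<bar>a\<bar>" .
  have c1: "s/(1-u) * (1-u) = s" using u by simp
  have "(1 - s/(1-u)) *\<^sub>R a + (s/(1-u)) *\<^sub>R x1 = a - (s/(1-u) * (1-u)) *\<^sub>R d"
  proof -
    have "\<And>c. (1 - c) *\<^sub>R a + c *\<^sub>R (a - (1-u) *\<^sub>R d) = a - (c * (1-u)) *\<^sub>R d"
      by (simp add: algebra_simps)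
    then show ?thesis unfolding x1d .
  qed
  then have "a - s *\<^sub>R d = (1 - s/(1-u)) *\<^sub>R a + (s/(1-u)) *\<^sub>R x1"
    unfolding c1 by (rule sym)
  also have "\<bar>\<dots>\<bar> \<le> (1 - s/(1-u)) *\<^sub>R \<bar>a\<bar> + (s/(1-u)) *\<^sub>R \<bar>x1\<bar>"
    using s u by (intro abs_conv_le) auto
  also have "\<dots> = \<bar>a\<bar>" unfolding e1 by (simp add: algebra_simps)
  finally have m: "\<bar>a - s *\<^sub>R d\<bar> \<le> \<bar>a\<bar>" .
  have "\<bar>a\<bar> + \<bar>s *\<^sub>R d\<bar> \<le> \<bar>a\<bar>"
    unfolding abs_sup_pm[symmetric] using p m by (rule le_supI)
  then have "\<bar>s *\<^sub>R d\<bar> \<le> 0" by (metis add_le_same_cancel1)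
  then have "s *\<^sub>R d = 0" by simp
  then have "d = 0" using s by simp
  then show False using ne unfolding d_def by simp
qed

lemma Lem:
  fixes A :: "'a::banach_lattice set" and a :: 'a
  assumes sol: "solid A" and ext: "a extreme_point_of A" and pA: "p \<in> A" and le: "\<bar>a\<bar> \<le> p"
  shows "p = \<bar>a\<bar>"
proof (rule ccontr)
  assume ne: "p \<noteq> \<bar>a\<bar>"
  define d where "d = p - \<bar>a\<bar>"
  have d0: "0 \<le> d" using le unfolding d_def by simp
  have dne: "d \<noteq> 0" using ne unfolding d_def by simp
  have p0: "0 \<le> p" using le abs_ge_zero order_trans by blast
  have "\<bar>a + d\<bar> \<le> \<bar>a\<bar> + \<bar>d\<bar>" by (rule abs_triangle_ineq)
  also have "\<dots> = \<bar>p\<bar>" using d0 p0 unfolding d_def by simp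
  finally have "a + d \<in> A" by (rule solidD[OF sol pA])
  moreover have "\<bar>a - d\<bar> \<le> \<bar>a\<bar> + \<bar>d\<bar>" by (rule abs_triangle_ineq4)
  then have "\<bar>a - d\<bar> \<le> \<bar>p\<bar>" using d0 p0 unfolding d_def by simp
  then have "a - d \<in> A" by (rule solidD[OF sol pA])
  moreover have "a \<in> open_segment (a - d) (a + d)"
    unfolding in_segment
  proof
    show "a - d \<noteq> a + d" using dne by (metis add_cancel_right_right diff_add_cancel double_zero add.assoc)
    show "\<exists>u. 0 < u \<and> u < 1 \<and> a = (1 - u) *\<^sub>R (a - d) + u *\<^sub>R (a + d)"
      proof (rule exI[of _ "1/2"], intro conjI)
        have "(1/2::real) + 1/2 = 1" by simp
        then have "a = (1/2::real) *\<^sub>R a + (1/2::real) *\<^sub>R a" by (metis scaleR_add_left scaleR_one)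
        then show "a = (1 - 1/2::real) *\<^sub>R (a - d) + (1/2::real) *\<^sub>R (a + d)"
          by (simp add: algebra_simps)
      qed simp_all
  qed
  ultimately show False using ext unfolding extreme_point_of_def by blast
qed

lemma fwd:
  fixes A :: "'a::banach_lattice set" and a :: 'a
  assumes sol: "solid A" and ext: "a extreme_point_of A"
  shows "order_extreme_point \<bar>a\<bar> A"
  unfolding order_extreme_point_def
proof (intro conjI ballI allI impI)
  have aA: "a \<in> A" using ext by (simp add: extreme_point_of_def)
  show "\<bar>a\<bar> \<in> A" by (rule solidD[OF sol aA]) simp
  fix x0 x1 and t :: real
  assume x0: "x0 \<in> A" and x1: "x1 \<in> A" and H: "0 < t \<and> t < 1 \<and> \<bar>a\<bar> \<le> (1 - t) *\<^sub>R x0 + t *\<^sub>R x1"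
  then have t: "0 < t" "t < 1" and le: "\<bar>a\<bar> \<le> (1 - t) *\<^sub>R x0 + t *\<^sub>R x1" by auto
  have ax0: "\<bar>x0\<bar> \<in> A" by (rule solidD[OF sol x0]) simp
  have ax1: "\<bar>x1\<bar> \<in> A" by (rule solidD[OF sol x1]) simp
  define P where "P = (1 - t) *\<^sub>R \<bar>x0\<bar>"
  define Q where "Q = t *\<^sub>R \<bar>x1\<bar>"
  have P0: "0 \<le> P" unfolding P_def using t by (intro scaleR_nonneg_nonneg) auto
  have Q0: "0 \<le> Q" unfolding Q_def using t by (intro scaleR_nonneg_nonneg) auto
  have g0: "x0 \<le> \<bar>x0\<bar>" by (rule abs_ge_self)
  have g1: "x1 \<le> \<bar>x1\<bar>" by (rule abs_ge_self)
  have h0: "(1 - t) *\<^sub>R x0 \<le> P" unfolding P_def by (rule scaleR_left_mono[OF g0]) (use t in simp)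
  have h1: "t *\<^sub>R x1 \<le> Q" unfolding Q_def by (rule scaleR_left_mono[OF g1]) (use t in simp)
  have "(1 - t) *\<^sub>R x0 + t *\<^sub>R x1 \<le> P + Q" using h0 h1 by (rule add_mono)
  with le have aPQ: "\<bar>a\<bar> \<le> P + Q" by (rule order_trans)
  define b where "b = inf (sup a (-P)) P"
  have bP: "\<bar>b\<bar> \<le> P" and cQ: "\<bar>a - b\<bar> \<le> Q" unfolding b_def using clamp[OF P0 Q0 aPQ] by auto
  define y0 where "y0 = (1 / (1 - t)) *\<^sub>R b"
  define y1 where "y1 = (1 / t) *\<^sub>R (a - b)"
  have "\<bar>y0\<bar> \<le> (1 / (1 - t)) *\<^sub>R \<bar>b\<bar>" unfolding y0_def using t by (intro abs_scale_le) auto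
  also have "\<dots> \<le> (1 / (1 - t)) *\<^sub>R P" using t bP by (intro scaleR_left_mono) auto
  also have "\<dots> = \<bar>x0\<bar>" unfolding P_def using t by simp
  finally have y0le: "\<bar>y0\<bar> \<le> \<bar>x0\<bar>" .
  have "\<bar>y1\<bar> \<le> (1 / t) *\<^sub>R \<bar>a - b\<bar>" unfolding y1_def using t by (intro abs_scale_le) auto
  also have "\<dots> \<le> (1 / t) *\<^sub>R Q" using t cQ by (intro scaleR_left_mono) auto
  also have "\<dots> = \<bar>x1\<bar>" unfolding Q_def using t by simp
  finally have y1le: "\<bar>y1\<bar> \<le> \<bar>x1\<bar>" .
  have y0A: "y0 \<in> A" using solidD[OF sol x0 y0le] .
  have y1A: "y1 \<in> A" using solidD[OF sol x1 y1le] .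
  have aeq: "a = (1 - t) *\<^sub>R y0 + t *\<^sub>R y1" unfolding y0_def y1_def using t by simp
  have "y0 = y1"
  proof (rule ccontr)
    assume "y0 \<noteq> y1"
    then have "a \<in> open_segment y0 y1" unfolding in_segment using t aeq by blast
    then show False using ext y0A y1A unfolding extreme_point_of_def by blast
  qed
  then have "a = y0" "a = y1" using aeq by (simp_all add: algebra_simps)
  then have "\<bar>a\<bar> \<le> \<bar>x0\<bar>" "\<bar>a\<bar> \<le> \<bar>x1\<bar>" using y0le y1le by auto
  then have e0: "\<bar>x0\<bar> = \<bar>a\<bar>" and e1: "\<bar>x1\<bar> = \<bar>a\<bar>" using Lem[OF sol ext ax0] Lem[OF sol ext ax1] by auto
  define u0 where "u0 = (1 - t) *\<^sub>R (\<bar>x0\<bar> - x0)"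
  define u1 where "u1 = t *\<^sub>R (\<bar>x1\<bar> - x1)"
  have u00: "0 \<le> u0" unfolding u0_def using t g0 by (intro scaleR_nonneg_nonneg) simp_all
  have u10: "0 \<le> u1" unfolding u1_def using t g1 by (intro scaleR_nonneg_nonneg) simp_all
  have "u0 + u1 = ((1 - t) *\<^sub>R \<bar>x0\<bar> + t *\<^sub>R \<bar>x1\<bar>) - ((1 - t) *\<^sub>R x0 + t *\<^sub>R x1)"
    unfolding u0_def u1_def by (simp add: algebra_simps)
  also have "\<dots> = \<bar>a\<bar> - ((1 - t) *\<^sub>R x0 + t *\<^sub>R x1)" unfolding e0 e1 by (simp add: algebra_simps)
  also have "\<dots> \<le> 0" using le by simp
  finally have s0: "u0 + u1 \<le> 0" .
  have "u0 \<le> 0" using order_trans[OF add_increasing2[OF u10 order_refl] s0] .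
  then have "u0 = 0" using u00 by simp
  then have x0e: "x0 = \<bar>a\<bar>" unfolding u0_def using t e0 by simp
  have "u1 \<le> 0" using order_trans[OF add_increasing[OF u00 order_refl] s0] .
  then have "u1 = 0" using u10 by simp
  then show "x1 = \<bar>a\<bar>" unfolding u1_def using t e1 by simp
  show "x0 = \<bar>a\<bar>" by (rule x0e)
qed

theorem mainTheorem1:
  fixes A :: "'a::banach_lattice set" and a :: 'a
  assumes "solid A" and "a \<in> A"
  shows "a extreme_point_of A \<longleftrightarrow> order_extreme_point \<bar>a\<bar> A"
  using fwd[OF assms(1)] bwd[OF assms] by blast
end
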